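(* Let $\mathfrak a=\{(a_1,\dots,a_{n+1})\in\mathbb R^{n+1}:a_1+\dots+a_{n+1}=0\}$ be the maximal abelian subspace of $\mathfrak p$ for $\mathrm{SL}_{n+1}\mathbb R$ (diagonal trace-zero matrices), with positive roots $\Lambda^+=\{a_j^*-a_l^*: j<l\}$. Let $\{v_1,\dots,v_n\}$ be any basis of $\mathfrak a$, and let $A$ be the $n\times|\Lambda^+|$ matrix with rows indexed by $i$ and columns by $\alpha\in\Lambda^+$, whose $(i,\alpha)$ entry is $1$ if $\alpha(v_i)\ne0$ and $0$ otherwise. Then each row of $A$ has at most one entry equal to $1$ in a column whose other entries are all $0$; that is, for each $i$ there is at most one $\alpha\in\Lambda^+$ with $\alpha(v_i)\ne0$ and $\alpha(v_k)=0$ for all $k\ne i$. *)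

theory Defs
  imports Complex_Main
begin

text \<open>Vectors of R^(n+1) are modelled as functions nat => real, using the
coordinates 0..n (coordinate j here is coordinate j+1 of the paper);
values outside 0..n are irrelevant.\<close>

definition frak_a :: "nat \<Rightarrow> (nat \<Rightarrow> real) set" where
  "frak_a n = {x. (\<Sum>j\<le>n. x j) = 0}"

text \<open>Positive roots a_j^* - a_l^* with j < l, encoded as the pair (j,l).\<close>
definition pos_roots :: "nat \<Rightarrow> (nat \<times> nat) set" where
  "pos_roots n = {(j, l). j < l \<and> l \<le> n}"

definition root_eval :: "nat \<times> nat \<Rightarrow> (nat \<Rightarrow> real) \<Rightarrow> real" where
  "root_eval \<alpha> x = x (fst \<alpha>) - x (snd \<alpha>)"

definition is_basis_of_a :: "nat \<Rightarrow> (nat \<Rightarrow> nat \<Rightarrow> real) \<Rightarrow> bool" where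
  "is_basis_of_a n v \<longleftrightarrow>
     (\<forall>i<n. v i \<in> frak_a n) \<and>
     (\<forall>c. (\<forall>j\<le>n. (\<Sum>i<n. c i * v i j) = 0) \<longrightarrow> (\<forall>i<n. c i = 0)) \<and>
     (\<forall>x\<in>frak_a n. \<exists>c. \<forall>j\<le>n. x j = (\<Sum>i<n. c i * v i j))"

end

theory Submission
  imports Defs
begin

lemma arith_cases:
  fixes a b :: real and j l p q :: nat
  assumes "j < l" "p < q" "a \<noteq> 0" "b \<noteq> 0"
    and e1: "b * ((if j = j then 1 else 0) - (if l = j then 1 else 0) - ((if j = l then 1 else 0) - (if l = l then 1 else 0)))
        = a * ((if j = p then 1 else 0) - (if l = p then 1 else 0) - ((if j = q then 1 else 0) - (if l = q then 1 else 0)))"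
    and e2: "b * ((if p = j then 1 else 0) - (if q = j then 1 else 0) - ((if p = l then 1 else 0) - (if q = l then 1 else 0)))
        = a * ((if p = p then 1 else 0) - (if q = p then 1 else 0) - ((if p = q then 1 else 0) - (if q = q then 1 else 0)))"
  shows "j = p \<and> l = q"
  using assms by (auto split: if_splits)

lemma test_in_a:
  assumes "s \<le> n" "t \<le> n"
  shows "(\<lambda>m. (if m = s then 1 else 0) - (if m = t then 1 else 0) :: real) \<in> frak_a n"
  using assms by (simp add: frak_a_def sum_subtractf)

theorem lemma11p3:
  fixes n :: nat and v :: "nat \<Rightarrow> nat \<Rightarrow> real"
  assumes "is_basis_of_a n v"
  shows "\<forall>i<n. \<forall>\<alpha>\<in>pos_roots n. \<forall>\<beta>\<in>pos_roots n.
           (root_eval \<alpha> (v i) \<noteq> 0 \<and> (\<forall>k<n. k \<noteq> i \<longrightarrow> root_eval \<alpha> (v k) = 0)) \<and>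
           (root_eval \<beta> (v i) \<noteq> 0 \<and> (\<forall>k<n. k \<noteq> i \<longrightarrow> root_eval \<beta> (v k) = 0))
           \<longrightarrow> \<alpha> = \<beta>"
proof (intro allI impI ballI)
  fix i \<alpha> \<beta>
  assume i: "i < n" and \<alpha>: "\<alpha> \<in> pos_roots n" and \<beta>: "\<beta> \<in> pos_roots n"
  assume H: "(root_eval \<alpha> (v i) \<noteq> 0 \<and> (\<forall>k<n. k \<noteq> i \<longrightarrow> root_eval \<alpha> (v k) = 0)) \<and>
           (root_eval \<beta> (v i) \<noteq> 0 \<and> (\<forall>k<n. k \<noteq> i \<longrightarrow> root_eval \<beta> (v k) = 0))"
  obtain j l where jl: "\<alpha> = (j, l)" "j < l" "l \<le> n" using \<alpha> by (auto simp: pos_roots_def)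
  obtain p q where pq: "\<beta> = (p, q)" "p < q" "q \<le> n" using \<beta> by (auto simp: pos_roots_def)
  define a where "a = root_eval \<alpha> (v i)"
  define b where "b = root_eval \<beta> (v i)"
  have span: "\<forall>x\<in>frak_a n. \<exists>c. \<forall>j\<le>n. x j = (\<Sum>i<n. c i * v i j)"
    using assms by (simp add: is_basis_of_a_def)
  have key: "\<And>\<gamma> x. \<gamma> \<in> {\<alpha>, \<beta>} \<Longrightarrow> x \<in> frak_a n \<Longrightarrow> \<exists>c. \<forall>\<delta>\<in>{\<alpha>,\<beta>}. root_eval \<delta> x = c * root_eval \<delta> (v i)"
  proof -
    fix \<gamma> x assume "x \<in> frak_a n"
    then obtain c where c: "\<forall>j\<le>n. x j = (\<Sum>i<n. c i * v i j)" using span by blast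
    have "root_eval \<delta> x = c i * root_eval \<delta> (v i)" if d: "\<delta> \<in> {\<alpha>, \<beta>}" for \<delta>
    proof -
      have fs: "fst \<delta> \<le> n" "snd \<delta> \<le> n" using d jl pq by auto
      have z: "\<forall>k<n. k \<noteq> i \<longrightarrow> root_eval \<delta> (v k) = 0" using d H by auto
      have "root_eval \<delta> x = (\<Sum>k<n. c k * root_eval \<delta> (v k))"
        using fs c by (simp add: root_eval_def sum_subtractf right_diff_distrib)
      also have "\<dots> = c i * root_eval \<delta> (v i)"
        using i z by (simp add: sum.remove[of "{..<n}" i])
      finally show ?thesis .
    qed
    then show "\<exists>c. \<forall>\<delta>\<in>{\<alpha>,\<beta>}. root_eval \<delta> x = c * root_eval \<delta> (v i)" by blast
  qed
  have rel: "b * root_eval \<alpha> x = a * root_eval \<beta> x" if xa: "x \<in> frak_a n" for x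
  proof -
    obtain c where "\<forall>\<delta>\<in>{\<alpha>,\<beta>}. root_eval \<delta> x = c * root_eval \<delta> (v i)"
      using key[of \<alpha> x] xa by blast
    then show ?thesis by (simp add: a_def b_def)
  qed
  have e1: "b * root_eval \<alpha> (\<lambda>m. (if m = j then 1 else 0) - (if m = l then 1 else 0)) =
     a * root_eval \<beta> (\<lambda>m. (if m = j then 1 else 0) - (if m = l then 1 else 0))"
    using jl by (intro rel test_in_a) auto
  have e2: "b * root_eval \<alpha> (\<lambda>m. (if m = p then 1 else 0) - (if m = q then 1 else 0)) =
     a * root_eval \<beta> (\<lambda>m. (if m = p then 1 else 0) - (if m = q then 1 else 0))"
    using pq by (intro rel test_in_a) auto
  have "j = p \<and> l = q"
  proof (rule arith_cases[where a=a and b=b])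
    show "a \<noteq> 0" "b \<noteq> 0" using H by (simp_all add: a_def b_def)
  qed (use jl pq e1 e2 in \<open>auto simp: root_eval_def split: if_splits\<close>)
  then show "\<alpha> = \<beta>" using jl pq by simp
qed

end
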